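(* Let $G=(V,E)$ be a transport graph with $n$ nodes and $m$ edges, let $A\in\mathbb{R}^{m\times n}$ be its incidence matrix, let $g\in\mathbb{R}^n$ be a vector of positive node weights, and let $c\in\mathbb{R}^m$ be the vector whose entries are all $0$ except the entry corresponding to the source/sink edge, which equals $1$. Consider the combinatorial continuous maximum flow (CCMF) problem $$\max_{F\in\mathbb{R}^m} c^TF \quad\text{s.t.}\quad A^TF=0,\qquad |A^T|F^2\le g^2 .$$ Its Lagrangian dual problem, with multipliers $\lambda\in\mathbb{R}^n$ (for the inequality constraints) and $\nu\in\mathbb{R}^n$ (for the equality constraints), is $$\min_{\lambda\in\mathbb{R}^n,\ \nu\in\mathbb{R}^n}\ \lambda^Tg^2+\frac14\Big(\mathbf{1}^m\cdot/(|A|\lambda)\Big)^T\Big((c+A\nu)^2\Big)\quad\text{s.t.}\quad \lambda\ge 0,$$ equivalently, in summation form, $$\min_{\lambda,\nu}\ \sum_{v_i\in V}\lambda_i g_i^2+\frac14\sum_{e_{ij}\in E\setminus\{e_{st}\}}\frac{(\nu_i-\nu_j)^2}{\lambda_i+\lambda_j}+\frac14\frac{(\nu_s-\nu_t-1)^2}{\lambda_s+\lambda_t}\quad\text{s.t. }\lambda_i\ge0\ \forall i\in V.$$ Moreover, an optimal solution $(F^*,\lambda^*,\nu^* )$ satisfies $$\max_F c^TF=c^TF^*=2{\lambda^*}^Tg^2,$$ and the $n$ equalities $$\lambda^*\cdot|A^T|\Big((c+A\nu^* )\cdot/(|A|\lambda^* )\Big)^2=4\,\lambda^*\cdot g^2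 .$$
   Context: A transport graph $G=(V,E)$ is a graph containing two distinguished nodes, a source $s$ and a sink $t$, with additional edges linking some nodes to the source and some to the sink, and an edge $e_{st}$ joining source and sink (the "source/sink edge"); $n=|V|$ and $m=|E|$ count all nodes and edges including these. Each edge $e_{ij}$ is oriented from $v_i$ to $v_j$, and a flow is a vector $F\in\mathbb{R}^m$ with $F_{ij}$ the flow on $e_{ij}$ (positive meaning from $v_i$ to $v_j$). The incidence matrix $A\in\mathbb{R}^{m\times n}$ has $A_{e_{ij},v_k}=+1$ if $k=i$, $-1$ if $k=j$, and $0$ otherwise; $|A|$ denotes the matrix of entrywise absolute values. For vectors, $v^2=v\cdot v$ is the entrywise (Hadamard) square, "$\cdot$" is the entrywise product, $u\cdot/v=[u_1/v_1,\dots,u_k/v_k]$ is entrywise division, $\mathbf{1}^k$ is the all-ones vector of length $k$, and inequalities between vectors are entrywise. *)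

theory Defs
  imports Complex_Main "HOL-Library.Extended_Real"
begin

definition transport_graph ::
  "('e::finite \<Rightarrow> 'v::finite) \<Rightarrow> ('e \<Rightarrow> 'v) \<Rightarrow> 'v \<Rightarrow> 'v \<Rightarrow> 'e \<Rightarrow> bool" where
  "transport_graph src dst s t est \<longleftrightarrow>
     (\<forall>e. src e \<noteq> dst e) \<and> s \<noteq> t \<and> {src est, dst est} = {s, t}"

definition inc :: "('e \<Rightarrow> 'v) \<Rightarrow> ('e \<Rightarrow> 'v) \<Rightarrow> 'e \<Rightarrow> 'v \<Rightarrow> real" where
  "inc src dst e k = (if k = src e then 1 else if k = dst e then -1 else 0)"

definition cvec :: "'e \<Rightarrow> 'e \<Rightarrow> real" where
  "cvec est e = (if e = est then 1 else 0)"

definition primal_obj :: "'e::finite \<Rightarrow> ('e \<Rightarrow> real) \<Rightarrow> real" where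
  "primal_obj est F = (\<Sum>e\<in>UNIV. cvec est e * F e)"

definition primal_feasible ::
  "('e::finite \<Rightarrow> 'v) \<Rightarrow> ('e \<Rightarrow> 'v) \<Rightarrow> ('v \<Rightarrow> real) \<Rightarrow> ('e \<Rightarrow> real) \<Rightarrow> bool" where
  "primal_feasible src dst g F \<longleftrightarrow>
     (\<forall>k. (\<Sum>e\<in>UNIV. inc src dst e k * F e) = 0) \<and>
     (\<forall>k. (\<Sum>e\<in>UNIV. \<bar>inc src dst e k\<bar> * (F e)\<^sup>2) \<le> (g k)\<^sup>2)"

definition primal_optimal ::
  "('e::finite \<Rightarrow> 'v) \<Rightarrow> ('e \<Rightarrow> 'v) \<Rightarrow> 'e \<Rightarrow> ('v \<Rightarrow> real) \<Rightarrow> ('e \<Rightarrow> real) \<Rightarrow> bool" where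
  "primal_optimal src dst est g F \<longleftrightarrow> primal_feasible src dst g F \<and>
     (\<forall>F'. primal_feasible src dst g F' \<longrightarrow> primal_obj est F' \<le> primal_obj est F)"

definition lagrangian ::
  "('e::finite \<Rightarrow> 'v::finite) \<Rightarrow> ('e \<Rightarrow> 'v) \<Rightarrow> 'e \<Rightarrow> ('v \<Rightarrow> real) \<Rightarrow>
   ('e \<Rightarrow> real) \<Rightarrow> ('v \<Rightarrow> real) \<Rightarrow> ('v \<Rightarrow> real) \<Rightarrow> real" where
  "lagrangian src dst est g F lam nu =
     primal_obj est F
     + (\<Sum>k\<in>UNIV. nu k * (\<Sum>e\<in>UNIV. inc src dst e k * F e))
     + (\<Sum>k\<in>UNIV. lam k * ((g k)\<^sup>2 - (\<Sum>e\<in>UNIV. \<bar>inc src dst e k\<bar> * (F e)\<^sup>2)))"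

definition dual_fun ::
  "('e::finite \<Rightarrow> 'v::finite) \<Rightarrow> ('e \<Rightarrow> 'v) \<Rightarrow> 'e \<Rightarrow> ('v \<Rightarrow> real) \<Rightarrow>
   ('v \<Rightarrow> real) \<Rightarrow> ('v \<Rightarrow> real) \<Rightarrow> ereal" where
  "dual_fun src dst est g lam nu = (SUP F. ereal (lagrangian src dst est g F lam nu))"

definition cAnu :: "('e \<Rightarrow> 'v::finite) \<Rightarrow> ('e \<Rightarrow> 'v) \<Rightarrow> 'e \<Rightarrow> ('v \<Rightarrow> real) \<Rightarrow> 'e \<Rightarrow> real" where
  "cAnu src dst est nu e = cvec est e + (\<Sum>k\<in>UNIV. inc src dst e k * nu k)"

definition absAlam :: "('e \<Rightarrow> 'v::finite) \<Rightarrow> ('e \<Rightarrow> 'v) \<Rightarrow> ('v \<Rightarrow> real) \<Rightarrow> 'e \<Rightarrow> real" where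
  "absAlam src dst lam e = (\<Sum>k\<in>UNIV. \<bar>inc src dst e k\<bar> * lam k)"

text \<open>Dual objective lambda^T g^2 + 1/4 (1 ./ (|A| lambda))^T (c + A nu)^2, with the
  usual extended-value convention: a term x^2/0 is +infinity if x \<noteq> 0 and 0 if x = 0.\<close>
definition dual_obj ::
  "('e::finite \<Rightarrow> 'v::finite) \<Rightarrow> ('e \<Rightarrow> 'v) \<Rightarrow> 'e \<Rightarrow> ('v \<Rightarrow> real) \<Rightarrow>
   ('v \<Rightarrow> real) \<Rightarrow> ('v \<Rightarrow> real) \<Rightarrow> ereal" where
  "dual_obj src dst est g lam nu =
     (if \<exists>e. absAlam src dst lam e = 0 \<and> cAnu src dst est nu e \<noteq> 0 then \<infinity>
      else ereal ((\<Sum>k\<in>UNIV. lam k * (g k)\<^sup>2)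
             + 1/4 * (\<Sum>e\<in>UNIV. (cAnu src dst est nu e)\<^sup>2 / absAlam src dst lam e)))"

definition dual_optimal ::
  "('e::finite \<Rightarrow> 'v::finite) \<Rightarrow> ('e \<Rightarrow> 'v) \<Rightarrow> 'e \<Rightarrow> ('v \<Rightarrow> real) \<Rightarrow>
   ('v \<Rightarrow> real) \<Rightarrow> ('v \<Rightarrow> real) \<Rightarrow> bool" where
  "dual_optimal src dst est g lam nu \<longleftrightarrow> (\<forall>k. lam k \<ge> 0) \<and>
     (\<forall>lam' nu'. (\<forall>k. lam' k \<ge> 0) \<longrightarrow>
        dual_obj src dst est g lam nu \<le> dual_obj src dst est g lam' nu')"

end

theory Submission
  imports Defs "HOL-Analysis.Analysis"
begin


lemma swap1:
  "(\<Sum>k\<in>UNIV. nu k * (\<Sum>e\<in>UNIV. inc src dst e k * F e))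
   = (\<Sum>e\<in>UNIV. F e * (\<Sum>k\<in>UNIV. inc src dst e k * nu k))"
proof -
  have "(\<Sum>k\<in>UNIV. nu k * (\<Sum>e\<in>UNIV. inc src dst e k * F e))
      = (\<Sum>k\<in>UNIV. \<Sum>e\<in>UNIV. nu k * (inc src dst e k * F e))" by (simp add: sum_distrib_left)
  also have "\<dots> = (\<Sum>e\<in>UNIV. \<Sum>k\<in>UNIV. nu k * (inc src dst e k * F e))" by (rule sum.swap)
  also have "\<dots> = (\<Sum>e\<in>UNIV. F e * (\<Sum>k\<in>UNIV. inc src dst e k * nu k))"
    by (simp add: sum_distrib_left mult_ac)
  finally show ?thesis .
qed

lemma swap2:
  "(\<Sum>k\<in>UNIV. lam k * (\<Sum>e\<in>UNIV. \<bar>inc src dst e k\<bar> * (F e)\<^sup>2))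
   = (\<Sum>e\<in>UNIV. absAlam src dst lam e * (F e)\<^sup>2)"
proof -
  have "(\<Sum>k\<in>UNIV. lam k * (\<Sum>e\<in>UNIV. \<bar>inc src dst e k\<bar> * (F e)\<^sup>2))
      = (\<Sum>k\<in>UNIV. \<Sum>e\<in>UNIV. lam k * (\<bar>inc src dst e k\<bar> * (F e)\<^sup>2))" by (simp add: sum_distrib_left)
  also have "\<dots> = (\<Sum>e\<in>UNIV. \<Sum>k\<in>UNIV. lam k * (\<bar>inc src dst e k\<bar> * (F e)\<^sup>2))" by (rule sum.swap)
  also have "\<dots> = (\<Sum>e\<in>UNIV. absAlam src dst lam e * (F e)\<^sup>2)"
    unfolding absAlam_def by (simp add: sum_distrib_left sum_distrib_right mult_ac)
  finally show ?thesis .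
qed

lemma cobj_eq:
  "primal_obj est F + (\<Sum>k\<in>UNIV. nu k * (\<Sum>e\<in>UNIV. inc src dst e k * F e))
   = (\<Sum>e\<in>UNIV. cAnu src dst est nu e * F e)"
  unfolding swap1 primal_obj_def cAnu_def
  by (simp add: sum.distrib[symmetric] algebra_simps)

lemma lag_eq:
  "lagrangian src dst est g F lam nu =
     (\<Sum>k\<in>UNIV. lam k * (g k)\<^sup>2) +
     (\<Sum>e\<in>UNIV. cAnu src dst est nu e * F e - absAlam src dst lam e * (F e)\<^sup>2)"
proof -
  have "(\<Sum>k\<in>UNIV. lam k * ((g k)\<^sup>2 - (\<Sum>e\<in>UNIV. \<bar>inc src dst e k\<bar> * (F e)\<^sup>2)))
     = (\<Sum>k\<in>UNIV. lam k * (g k)\<^sup>2) - (\<Sum>e\<in>UNIV. absAlam src dst lam e * (F e)\<^sup>2)"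
    unfolding swap2[symmetric] by (simp add: right_diff_distrib sum_subtractf)
  then show ?thesis unfolding lagrangian_def using cobj_eq[of est F nu src dst]
    by (simp add: sum_subtractf)
qed

lemma abs_inc: "\<bar>inc src dst e k\<bar> = 0 \<or> \<bar>inc src dst e k\<bar> = 1"
  by (simp add: inc_def)

lemma absAlam_nonneg: "\<forall>k. lam k \<ge> 0 \<Longrightarrow> absAlam src dst lam e \<ge> 0"
  unfolding absAlam_def by (intro sum_nonneg) auto

lemma absAlam_ge: "\<forall>k. lam k \<ge> 0 \<Longrightarrow> \<bar>inc src dst e k\<bar> * lam k \<le> absAlam src dst lam e"
  unfolding absAlam_def by (rule member_le_sum) auto

lemma term_bound:
  fixes a b x :: real
  assumes "a \<ge> 0" "a = 0 \<Longrightarrow> b = 0"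
  shows "b * x - a * x\<^sup>2 \<le> 1/4 * (b\<^sup>2 / a)"
proof (cases "a = 0")
  case True then show ?thesis using assms by simp
next
  case False
  then have "a > 0" using assms by simp
  have "4 * a * (b * x - a * x\<^sup>2) \<le> b\<^sup>2"
    using sum_squares_ge_zero[of "b - 2*a*x" 0] by (simp add: power2_eq_square algebra_simps)
  then show ?thesis using \<open>a > 0\<close> by (simp add: field_simps)
qed

lemma term_eq:
  fixes a b x :: real
  assumes "a \<ge> 0" "a = 0 \<Longrightarrow> b = 0" "b * x - a * x\<^sup>2 = 1/4 * (b\<^sup>2 / a)"
  shows "b = 2 * a * x"
proof (cases "a = 0")
  case True then show ?thesis using assms by simp
next
  case False
  then have "a > 0" using assms by simp
  have "4 * a * (b * x - a * x\<^sup>2) = b\<^sup>2" using assms(3) \<open>a > 0\<close> by (simp add: field_simps)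
  then have "(b - 2*a*x)\<^sup>2 = 0" by (simp add: power2_eq_square algebra_simps)
  then show ?thesis by simp
qed

lemma dual_fun_eq:
  assumes lam: "\<forall>k. lam k \<ge> 0"
  shows "dual_fun src dst est g lam nu = dual_obj src dst est g lam nu"
proof (cases "\<exists>e. absAlam src dst lam e = 0 \<and> cAnu src dst est nu e \<noteq> 0")
  case True
  then obtain e0 where e0: "absAlam src dst lam e0 = 0" "cAnu src dst est nu e0 \<noteq> 0" by blast
  define C where "C = (\<Sum>k\<in>UNIV. lam k * (g k)\<^sup>2)"
  define b where "b = cAnu src dst est nu e0"
  have L: "lagrangian src dst est g (\<lambda>e. if e = e0 then x else 0) lam nu = C + b * x" for x
  proof -
    have h: "(\<lambda>e. cAnu src dst est nu e * (if e = e0 then x else 0)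
            - absAlam src dst lam e * (if e = e0 then x else 0)\<^sup>2)
        = (\<lambda>e. if e = e0 then b * x else 0)"
      using e0 by (auto simp: b_def)
    show ?thesis unfolding lag_eq C_def h by simp
  qed
  have "dual_fun src dst est g lam nu = \<infinity>"
    unfolding dual_fun_def
  proof (rule ereal_top)
    fix B
    have "ereal B \<le> ereal (lagrangian src dst est g (\<lambda>e. if e = e0 then (B - C)/b else 0) lam nu)"
      unfolding L using e0 by (simp add: b_def)
    also have "\<dots> \<le> (SUP F. ereal (lagrangian src dst est g F lam nu))"
      by (rule SUP_upper) simp
    finally show "ereal B \<le> (SUP F. ereal (lagrangian src dst est g F lam nu))" .
  qed
  then show ?thesis using True unfolding dual_obj_def by simp
next
  case False
  define V where "V = (\<Sum>k\<in>UNIV. lam k * (g k)\<^sup>2)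
             + 1/4 * (\<Sum>e\<in>UNIV. (cAnu src dst est nu e)\<^sup>2 / absAlam src dst lam e)"
  have obj: "dual_obj src dst est g lam nu = ereal V" using False unfolding dual_obj_def V_def by simp
  have le: "lagrangian src dst est g F lam nu \<le> V" for F
    unfolding lag_eq V_def sum_distrib_left
    by (intro add_left_mono sum_mono term_bound) (use False absAlam_nonneg[OF lam] in auto)
  define F0 where "F0 e = cAnu src dst est nu e / (2 * absAlam src dst lam e)" for e
  have eq: "lagrangian src dst est g F0 lam nu = V"
  proof -
    have "cAnu src dst est nu e * F0 e - absAlam src dst lam e * (F0 e)\<^sup>2
        = 1/4 * ((cAnu src dst est nu e)\<^sup>2 / absAlam src dst lam e)" for e
      using False unfolding F0_def
      by (cases "absAlam src dst lam e = 0") (auto simp: field_simps power2_eq_square)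
    then show ?thesis unfolding lag_eq V_def sum_distrib_left by simp
  qed
  have "dual_fun src dst est g lam nu = ereal V"
    unfolding dual_fun_def
  proof (rule antisym)
    show "(SUP F. ereal (lagrangian src dst est g F lam nu)) \<le> ereal V"
      by (rule SUP_least) (simp add: le)
    show "ereal V \<le> (SUP F. ereal (lagrangian src dst est g F lam nu))"
      by (rule SUP_upper2[of F0]) (auto simp: eq)
  qed
  then show ?thesis using obj by simp
qed

lemma lag_feas:
  assumes "primal_feasible src dst g F"
  shows "lagrangian src dst est g F lam nu = primal_obj est F +
      (\<Sum>k\<in>UNIV. lam k * ((g k)\<^sup>2 - (\<Sum>e\<in>UNIV. \<bar>inc src dst e k\<bar> * (F e)\<^sup>2)))"
  using assms unfolding lagrangian_def primal_feasible_def by simp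

lemma weak:
  assumes F: "primal_feasible src dst g F" and lam: "\<forall>k. lam k \<ge> 0"
  shows "ereal (primal_obj est F) \<le> dual_obj src dst est g lam nu"
proof -
  have "(\<Sum>k\<in>UNIV. lam k * ((g k)\<^sup>2 - (\<Sum>e\<in>UNIV. \<bar>inc src dst e k\<bar> * (F e)\<^sup>2))) \<ge> 0"
    using F lam unfolding primal_feasible_def by (intro sum_nonneg mult_nonneg_nonneg) auto
  then have "ereal (primal_obj est F) \<le> ereal (lagrangian src dst est g F lam nu)"
    unfolding lag_feas[OF F] by simp
  also have "\<dots> \<le> dual_fun src dst est g lam nu" unfolding dual_fun_def
    by (rule SUP_upper) simp
  finally show ?thesis using dual_fun_eq[OF lam, of src dst est g nu] by simp
qed

lemma tight:
  assumes F: "primal_feasible src dst g F" and lam: "\<forall>k. lam k \<ge> 0"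
    and le: "dual_obj src dst est g lam nu \<le> ereal (primal_obj est F)"
  shows "(\<forall>e. cAnu src dst est nu e = 2 * absAlam src dst lam e * F e) \<and>
         (\<forall>k. lam k * (\<Sum>e\<in>UNIV. \<bar>inc src dst e k\<bar> * (F e)\<^sup>2) = lam k * (g k)\<^sup>2)"
proof -
  let ?a = "absAlam src dst lam" and ?b = "cAnu src dst est nu"
  have nc: "\<not> (\<exists>e. ?a e = 0 \<and> ?b e \<noteq> 0)"
    using le unfolding dual_obj_def by (auto split: if_splits)
  define V where "V = (\<Sum>k\<in>UNIV. lam k * (g k)\<^sup>2) + 1/4 * (\<Sum>e\<in>UNIV. (?b e)\<^sup>2 / ?a e)"
  have V: "V \<le> primal_obj est F" using le nc unfolding dual_obj_def V_def by simp
  define S where "S = (\<Sum>k\<in>UNIV. lam k * ((g k)\<^sup>2 - (\<Sum>e\<in>UNIV. \<bar>inc src dst e k\<bar> * (F e)\<^sup>2)))"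
  have Snn: "\<forall>k. lam k * ((g k)\<^sup>2 - (\<Sum>e\<in>UNIV. \<bar>inc src dst e k\<bar> * (F e)\<^sup>2)) \<ge> 0"
    using F lam unfolding primal_feasible_def by (auto intro: mult_nonneg_nonneg)
  have L1: "lagrangian src dst est g F lam nu = primal_obj est F + S"
    unfolding lag_feas[OF F] S_def ..
  have tb: "\<forall>e. ?b e * F e - ?a e * (F e)\<^sup>2 \<le> 1/4 * ((?b e)\<^sup>2 / ?a e)"
    using nc absAlam_nonneg[OF lam] by (intro allI term_bound) auto
  have L2: "lagrangian src dst est g F lam nu \<le> V"
    unfolding lag_eq V_def sum_distrib_left
    by (intro add_left_mono sum_mono) (use tb in auto)
  have "S \<le> 0" using L1 L2 V by simp
  moreover have "S \<ge> 0" unfolding S_def using Snn by (intro sum_nonneg) auto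
  ultimately have "S = 0" by simp
  then have S0: "\<forall>k. lam k * ((g k)\<^sup>2 - (\<Sum>e\<in>UNIV. \<bar>inc src dst e k\<bar> * (F e)\<^sup>2)) = 0"
    unfolding S_def using Snn sum_nonneg_eq_0_iff[of UNIV "\<lambda>k. lam k * ((g k)\<^sup>2 - (\<Sum>e\<in>UNIV. \<bar>inc src dst e k\<bar> * (F e)\<^sup>2))"] by simp
  have "(\<Sum>e\<in>UNIV. 1/4 * ((?b e)\<^sup>2 / ?a e) - (?b e * F e - ?a e * (F e)\<^sup>2)) \<le> 0"
    using L1 L2 V \<open>S = 0\<close> unfolding lag_eq V_def sum_subtractf sum_distrib_left by simp
  moreover have "\<forall>e. 1/4 * ((?b e)\<^sup>2 / ?a e) - (?b e * F e - ?a e * (F e)\<^sup>2) \<ge> 0"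
    using tb by auto
  ultimately have "(\<Sum>e\<in>UNIV. 1/4 * ((?b e)\<^sup>2 / ?a e) - (?b e * F e - ?a e * (F e)\<^sup>2)) = 0"
    by (intro antisym sum_nonneg) auto
  then have "\<forall>e. 1/4 * ((?b e)\<^sup>2 / ?a e) - (?b e * F e - ?a e * (F e)\<^sup>2) = 0"
    using sum_nonneg_eq_0_iff[of UNIV "\<lambda>e. 1/4 * ((?b e)\<^sup>2 / ?a e) - (?b e * F e - ?a e * (F e)\<^sup>2)"]
      \<open>\<forall>e. 1/4 * ((?b e)\<^sup>2 / ?a e) - (?b e * F e - ?a e * (F e)\<^sup>2) \<ge> 0\<close> by simp
  then have "\<forall>e. ?b e = 2 * ?a e * F e"
    using nc absAlam_nonneg[OF lam] by (auto intro!: term_eq)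
  moreover have "\<forall>k. lam k * (\<Sum>e\<in>UNIV. \<bar>inc src dst e k\<bar> * (F e)\<^sup>2) = lam k * (g k)\<^sup>2"
  proof
    fix k
    have "lam k * (g k)\<^sup>2 - lam k * (\<Sum>e\<in>UNIV. \<bar>inc src dst e k\<bar> * (F e)\<^sup>2) = 0"
      using S0 by (simp only: right_diff_distrib)
    then have "lam k * (g k)\<^sup>2 = lam k * (\<Sum>e\<in>UNIV. \<bar>inc src dst e k\<bar> * (F e)\<^sup>2)"
      by (rule iffD2[OF eq_iff_diff_eq_0])
    then show "lam k * (\<Sum>e\<in>UNIV. \<bar>inc src dst e k\<bar> * (F e)\<^sup>2) = lam k * (g k)\<^sup>2" by (rule sym)
  qed
  ultimately show ?thesis by (rule conjI)
qed

lemma val_lem: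
  assumes div: "\<forall>k. (\<Sum>e\<in>UNIV. inc src dst e k * F e) = 0" and lam: "\<forall>k. lam k \<ge> 0"
    and b: "\<forall>e. cAnu src dst est nu e = 2 * absAlam src dst lam e * F e"
  shows "primal_obj est F = 2 * (\<Sum>e\<in>UNIV. absAlam src dst lam e * (F e)\<^sup>2)"
    and "dual_obj src dst est g lam nu =
         ereal ((\<Sum>k\<in>UNIV. lam k * (g k)\<^sup>2) + (\<Sum>e\<in>UNIV. absAlam src dst lam e * (F e)\<^sup>2))"
proof -
  have "primal_obj est F = (\<Sum>e\<in>UNIV. cAnu src dst est nu e * F e)"
    using cobj_eq[of est F nu src dst] div by simp
  also have "\<dots> = 2 * (\<Sum>e\<in>UNIV. absAlam src dst lam e * (F e)\<^sup>2)"
    using b by (simp add: sum_distrib_left power2_eq_square mult_ac)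
  finally show "primal_obj est F = 2 * (\<Sum>e\<in>UNIV. absAlam src dst lam e * (F e)\<^sup>2)" .
  have nc: "\<not> (\<exists>e. absAlam src dst lam e = 0 \<and> cAnu src dst est nu e \<noteq> 0)" using b by simp
  have "1/4 * ((cAnu src dst est nu e)\<^sup>2 / absAlam src dst lam e) = absAlam src dst lam e * (F e)\<^sup>2" for e
    using b by (cases "absAlam src dst lam e = 0") (auto simp: field_simps power2_eq_square)
  then show "dual_obj src dst est g lam nu =
         ereal ((\<Sum>k\<in>UNIV. lam k * (g k)\<^sup>2) + (\<Sum>e\<in>UNIV. absAlam src dst lam e * (F e)\<^sup>2))"
    using nc unfolding dual_obj_def by (simp add: sum_distrib_left)
qed



lemma exists_primal_opt:
  fixes src dst :: "'e::finite \<Rightarrow> 'v::finite" and g :: "'v \<Rightarrow> real"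
  assumes g: "\<forall>k. g k > 0"
  shows "\<exists>F. primal_optimal src dst est g F"
proof -
  define K where "K = {x::real^'e. primal_feasible src dst g (\<lambda>e. x$e)}"
  have Keq: "K = (\<Inter>k. {x. (\<Sum>e\<in>UNIV. inc src dst e k * x$e) = 0} \<inter>
                    {x. (\<Sum>e\<in>UNIV. \<bar>inc src dst e k\<bar> * (x$e)\<^sup>2) \<le> (g k)\<^sup>2})"
    unfolding K_def primal_feasible_def by auto
  have cl: "closed K" unfolding Keq
    by (intro closed_INT ballI closed_Int closed_Collect_eq closed_Collect_le continuous_intros)
  have bnd: "\<bar>x$e\<bar> \<le> g (src e)" if "x \<in> K" for x e
  proof -
    have "\<bar>inc src dst e (src e)\<bar> * (x$e)\<^sup>2 \<le> (\<Sum>e'\<in>UNIV. \<bar>inc src dst e' (src e)\<bar> * (x$e')\<^sup>2)"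
      by (rule member_le_sum) auto
    also have "\<dots> \<le> (g (src e))\<^sup>2" using that unfolding K_def primal_feasible_def by auto
    finally have "(x$e)\<^sup>2 \<le> (g (src e))\<^sup>2" by (simp add: inc_def)
    then have "\<bar>x$e\<bar> \<le> \<bar>g (src e)\<bar>" using abs_le_square_iff[of "x$e" "g (src e)"] by simp
    then show ?thesis using g[rule_format, of "src e"] by simp
  qed
  have "bounded K" unfolding bounded_iff
  proof (intro exI ballI)
    fix x assume "x \<in> K"
    have "norm x \<le> (\<Sum>e\<in>UNIV. \<bar>x$e\<bar>)" by (rule norm_le_l1_cart)
    also have "\<dots> \<le> (\<Sum>e\<in>UNIV. g (src e))" using bnd[OF \<open>x \<in> K\<close>] by (intro sum_mono) auto
    finally show "norm x \<le> (\<Sum>e\<in>UNIV. g (src e))" .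
  qed
  then have cp: "compact K" using cl by (simp add: compact_eq_bounded_closed)
  have "0 \<in> K" unfolding K_def primal_feasible_def using g
    by (auto simp: less_imp_le)
  then have ne: "K \<noteq> {}" by auto
  have ct: "continuous_on K (\<lambda>x. primal_obj est (\<lambda>e. x$e))"
    unfolding primal_obj_def by (intro continuous_intros)
  obtain x where x: "x \<in> K" "\<forall>y\<in>K. primal_obj est (\<lambda>e. y$e) \<le> primal_obj est (\<lambda>e. x$e)"
    using continuous_attains_sup[OF cp ne ct] by blast
  show ?thesis
  proof (intro exI)
    show "primal_optimal src dst est g (\<lambda>e. x$e)"
      unfolding primal_optimal_def
    proof (intro conjI allI impI)
      show "primal_feasible src dst g (\<lambda>e. x$e)" using x(1) unfolding K_def by simp
      fix F' assume "primal_feasible src dst g F'"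
      moreover have "vec_nth (vec_lambda F') = F'" by (rule ext) simp
      ultimately have "(\<chi> e. F' e) \<in> K" unfolding K_def by simp
      then have "primal_obj est (\<lambda>e. (\<chi> e. F' e)$e) \<le> primal_obj est (\<lambda>e. x$e)" using x(2) by blast
      then show "primal_obj est F' \<le> primal_obj est (\<lambda>e. x$e)" by simp
    qed
  qed
qed



lemma sq_convex:
  fixes u v a b :: real
  assumes "u \<ge> 0" "v \<ge> 0" "u + v = 1"
  shows "(u * a + v * b)\<^sup>2 \<le> u * a\<^sup>2 + v * b\<^sup>2"
proof -
  have v: "v = 1 - u" using assms(3) by simp
  have "u * a\<^sup>2 + v * b\<^sup>2 - (u * a + v * b)\<^sup>2 = u * v * (a-b)\<^sup>2"
    unfolding v by (simp add: power2_eq_square algebra_simps)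
  moreover have "u * v * (a-b)\<^sup>2 \<ge> 0" using assms by simp
  ultimately show ?thesis by simp
qed

lemma sq_convex_c:
  fixes u v a b c :: real
  assumes "u \<ge> 0" "v \<ge> 0" "u + v = 1" "c \<ge> 0"
  shows "c * (u * a + v * b)\<^sup>2 \<le> u * (c * a\<^sup>2) + v * (c * b\<^sup>2)"
proof -
  have "c * (u * a + v * b)\<^sup>2 \<le> c * (u * a\<^sup>2 + v * b\<^sup>2)"
    by (rule mult_left_mono[OF sq_convex[OF assms(1-3)] assms(4)])
  also have "\<dots> = u * (c * a\<^sup>2) + v * (c * b\<^sup>2)" by (simp add: algebra_simps)
  finally show ?thesis .
qed

lemma tail_lemma:
  fixes nu0 b p :: real
  assumes "\<forall>t>p. nu0 * t \<ge> b"
  shows "nu0 \<ge> 0 \<and> nu0 * p \<ge> b"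
proof -
  have "nu0 \<ge> 0"
  proof (rule ccontr)
    assume "\<not> nu0 \<ge> 0" then have n: "nu0 < 0" by simp
    define X where "X = b - nu0 * (p+1)"
    define t where "t = p + 1 + (\<bar>X\<bar> + 1) / (- nu0)"
    have "(\<bar>X\<bar> + 1) / (- nu0) > 0" using n by (intro divide_pos_pos) auto
    then have "t > p" unfolding t_def by simp
    have "nu0 * t = nu0 * (p+1) - (\<bar>X\<bar> + 1)" using n unfolding t_def by (simp add: field_simps)
    also have "\<dots> < b" unfolding X_def using abs_ge_self[of "b - nu0 * (p + 1)"] by linarith
    finally show False using assms \<open>t > p\<close> by force
  qed
  moreover have "nu0 * p \<ge> b"
  proof (rule ccontr)
    assume a: "\<not> nu0 * p \<ge> b"
    show False
    proof (cases "nu0 = 0")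
      case True then show False using assms a by (metis gt_ex mult_zero_left)
    next
      case False
      then have "nu0 > 0" using \<open>nu0 \<ge> 0\<close> by simp
      define t where "t = (p + b/nu0)/2"
      have "b/nu0 > p" using a \<open>nu0 > 0\<close> by (simp add: field_simps)
      then have "t > p" unfolding t_def by simp
      have "nu0 * t = (nu0 * p + b)/2" unfolding t_def using \<open>nu0 > 0\<close> by (simp add: field_simps)
      then have "nu0 * t < b" using a by simp
      then show False using assms \<open>t > p\<close> by force
    qed
  qed
  ultimately show ?thesis by simp
qed

lemma aux_div:
  fixes n m P p S :: real
  assumes "n > 0" "m + n * P \<le> n * p" "S = - m / n"
  shows "P - S \<le> p"
proof -
  have "P - S = (m + n * P) / n" using assms(1,3) by (simp add: field_simps)
  also have "\<dots> \<le> p" using assms(1,2) by (simp add: pos_divide_le_eq mult.commute)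
  finally show ?thesis .
qed

lemma exists_lam:
  fixes src dst :: "'e::finite \<Rightarrow> 'v::finite" and g :: "'v \<Rightarrow> real"
  assumes g: "\<forall>k. g k > 0" and opt: "primal_optimal src dst est g Fs"
  shows "\<exists>lam. (\<forall>k. lam k \<ge> 0) \<and>
     (\<forall>F. (\<forall>k. (\<Sum>e\<in>UNIV. inc src dst e k * F e) = 0) \<longrightarrow>
        primal_obj est F - (\<Sum>k\<in>UNIV. lam k *
           ((\<Sum>e\<in>UNIV. \<bar>inc src dst e k\<bar> * (F e)\<^sup>2) - (g k)\<^sup>2)) \<le> primal_obj est Fs)"
proof -
  define p where "p = primal_obj est Fs"
  define load where "load F k = (\<Sum>e\<in>UNIV. \<bar>inc src dst e k\<bar> * (F e)\<^sup>2)" for F k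
  define dv where "dv F k = (\<Sum>e\<in>UNIV. inc src dst e k * F e)" for F k
  define S :: "((real^'v) \<times> real) set" where
    "S = {(u,t). \<exists>F. (\<forall>k. dv F k = 0) \<and> (\<forall>k. load F k - (g k)\<^sup>2 \<le> u$k) \<and> t \<le> primal_obj est F}"
  define T :: "((real^'v) \<times> real) set" where "T = {0} \<times> {p<..}"
  have cT: "convex T" unfolding T_def by (intro convex_Times convex_singleton convex_real_interval)
  have cS: "convex S" unfolding convex_def
  proof (intro ballI allI impI)
    fix x y :: "(real^'v) \<times> real" and u v :: real
    assume x: "x \<in> S" and y: "y \<in> S" and uv: "0 \<le> u" "0 \<le> v" "u + v = 1"
    obtain F1 where F1: "\<forall>k. dv F1 k = 0" "\<forall>k. load F1 k - (g k)\<^sup>2 \<le> fst x $ k" "snd x \<le> primal_obj est F1"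
      using x unfolding S_def by auto
    obtain F2 where F2: "\<forall>k. dv F2 k = 0" "\<forall>k. load F2 k - (g k)\<^sup>2 \<le> fst y $ k" "snd y \<le> primal_obj est F2"
      using y unfolding S_def by auto
    define F where "F e = u * F1 e + v * F2 e" for e
    have "dv F k = u * dv F1 k + v * dv F2 k" for k
      unfolding dv_def F_def by (simp add: sum.distrib sum_distrib_left algebra_simps)
    then have d: "\<forall>k. dv F k = 0" using F1 F2 by simp
    have ld: "load F k \<le> u * load F1 k + v * load F2 k" for k
    proof -
      have "load F k \<le> (\<Sum>e\<in>UNIV. u * (\<bar>inc src dst e k\<bar> * (F1 e)\<^sup>2) + v * (\<bar>inc src dst e k\<bar> * (F2 e)\<^sup>2))"
        unfolding load_def F_def by (intro sum_mono sq_convex_c[OF uv]) simp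
      also have "\<dots> = u * load F1 k + v * load F2 k"
        unfolding load_def by (simp add: sum.distrib sum_distrib_left)
      finally show ?thesis .
    qed
    have l: "\<forall>k. load F k - (g k)\<^sup>2 \<le> fst (u *\<^sub>R x + v *\<^sub>R y) $ k"
    proof
      fix k
      have h1: "u * load F1 k \<le> u * (fst x $ k + (g k)\<^sup>2)"
        using F1(2)[rule_format, of k] uv(1) by (intro mult_left_mono) (simp_all add: diff_le_eq)
      have h2: "v * load F2 k \<le> v * (fst y $ k + (g k)\<^sup>2)"
        using F2(2)[rule_format, of k] uv(2) by (intro mult_left_mono) (simp_all add: diff_le_eq)
      have h3: "fst (u *\<^sub>R x + v *\<^sub>R y) $ k = u * fst x $ k + v * fst y $ k" by simp
      have h4: "u * (fst x $ k + (g k)\<^sup>2) + v * (fst y $ k + (g k)\<^sup>2)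
          = u * fst x $ k + v * fst y $ k + (u + v) * (g k)\<^sup>2" by (simp add: algebra_simps)
      have "load F k \<le> u * load F1 k + v * load F2 k" by (rule ld)
      also have "\<dots> \<le> u * (fst x $ k + (g k)\<^sup>2) + v * (fst y $ k + (g k)\<^sup>2)"
        by (rule add_mono[OF h1 h2])
      also have "\<dots> = fst (u *\<^sub>R x + v *\<^sub>R y) $ k + (g k)\<^sup>2" unfolding h4 h3 uv(3) by simp
      finally show "load F k - (g k)\<^sup>2 \<le> fst (u *\<^sub>R x + v *\<^sub>R y) $ k" by (simp add: diff_le_eq)
    qed
    have "primal_obj est F = u * primal_obj est F1 + v * primal_obj est F2"
      unfolding primal_obj_def F_def by (simp add: sum.distrib sum_distrib_left algebra_simps)
    then have o: "snd (u *\<^sub>R x + v *\<^sub>R y) \<le> primal_obj est F"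
      using F1(3) F2(3) uv by (simp add: add_mono mult_left_mono)
    show "u *\<^sub>R x + v *\<^sub>R y \<in> S" unfolding S_def
      using d l o by (cases "u *\<^sub>R x + v *\<^sub>R y") auto
  qed
  have memS: "(u, t) \<in> S" if "\<forall>k. dv F k = 0" "\<forall>k. load F k - (g k)\<^sup>2 \<le> u$k"
       "t \<le> primal_obj est F" for F u t
    unfolding S_def using that by blast
  have Z: "dv (\<lambda>e. 0) k = 0" "load (\<lambda>e. 0) k = 0" "primal_obj est (\<lambda>e. 0) = 0" for k
    unfolding dv_def load_def primal_obj_def by simp_all
  have neS: "S \<noteq> {}" using memS[of "\<lambda>e. 0" 0 0] Z by (auto simp: less_imp_le[OF g[rule_format]])
  have neT: "T \<noteq> {}" unfolding T_def by auto
  have disj: "S \<inter> T = {}"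
  proof (rule ccontr)
    assume "S \<inter> T \<noteq> {}"
    then obtain t F where t: "t > p" "\<forall>k. dv F k = 0" "\<forall>k. load F k - (g k)\<^sup>2 \<le> 0" "t \<le> primal_obj est F"
      unfolding S_def T_def by auto
    then have "primal_feasible src dst g F" unfolding primal_feasible_def dv_def load_def by auto
    then have "primal_obj est F \<le> p" using opt unfolding primal_optimal_def p_def by auto
    then show False using t by simp
  qed
  obtain a b where ab: "a \<noteq> 0" "\<forall>x\<in>S. inner a x \<le> b" "\<forall>x\<in>T. inner a x \<ge> b"
    using separating_hyperplane_sets[OF cS cT neS neT disj] by blast
  obtain mu nu0 where a: "a = (mu, nu0)" by (cases a)
  have inn: "inner a (u, t) = (\<Sum>k\<in>UNIV. mu$k * u$k) + nu0 * t" for u t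
    unfolding a by (simp add: inner_vec_def)
  have mu: "mu$k \<le> 0" for k
  proof (rule ccontr)
    assume "\<not> mu$k \<le> 0" then have mk: "mu$k > 0" by simp
    define M where "M = (\<bar>b\<bar> + 1) / mu$k"
    have M: "M \<ge> 0" unfolding M_def using mk by simp
    define u :: "real^'v" where "u = (\<chi> j. if j = k then M else 0)"
    have "(u, 0) \<in> S" using M g by (intro memS[of "\<lambda>e. 0"]) (auto simp: Z u_def intro: order_trans[OF _ M])
    then have "inner a (u, 0) \<le> b" using ab by auto
    moreover have "inner a (u, 0) = mu$k * M" unfolding inn u_def
      by (simp add: if_distrib cong: if_cong)
    moreover have "mu$k * M = \<bar>b\<bar> + 1" unfolding M_def using mk by simp
    ultimately show False by linarith
  qed
  have "\<forall>t>p. nu0 * t \<ge> b"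
  proof (intro allI impI)
    fix t assume "t > p"
    then have "(0, t) \<in> T" unfolding T_def by simp
    then show "nu0 * t \<ge> b" using ab(3) inn[of 0 t] by auto
  qed
  from tail_lemma[OF this] have nu0: "nu0 \<ge> 0" "nu0 * p \<ge> b" by auto
  have "nu0 \<noteq> 0"
  proof
    assume n0: "nu0 = 0"
    have "((\<chi> k. - (g k)\<^sup>2), 0) \<in> S" by (intro memS[of "\<lambda>e. 0"]) (auto simp: Z)
    then have "inner a ((\<chi> k. - (g k)\<^sup>2), 0) \<le> b" using ab by auto
    then have s: "(\<Sum>k\<in>UNIV. (- mu$k) * (g k)\<^sup>2) \<le> 0" using nu0 n0 unfolding inn by simp
    have nn: "\<forall>k. (- mu$k) * (g k)\<^sup>2 \<ge> 0"
      by (intro allI mult_nonneg_nonneg) (simp_all add: mu)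
    then have "(\<Sum>k\<in>UNIV. (- mu$k) * (g k)\<^sup>2) = 0" using s by (intro antisym sum_nonneg) auto
    then have "\<forall>k. (- mu$k) * (g k)\<^sup>2 = 0"
      using sum_nonneg_eq_0_iff[of UNIV "\<lambda>k. (- mu$k) * (g k)\<^sup>2"] nn by simp
    have "mu$k = 0" for k
    proof -
      have "(- mu$k) * (g k)\<^sup>2 = 0" using \<open>\<forall>k. (- mu$k) * (g k)\<^sup>2 = 0\<close> by blast
      moreover have "(g k)\<^sup>2 \<noteq> 0" using g[rule_format, of k] by simp
      ultimately show ?thesis by simp
    qed
    then have "mu = 0" by (simp add: vec_eq_iff)
    then show False using ab(1) a n0 by (simp add: zero_prod_def)
  qed
  then have nu0p: "nu0 > 0" using nu0 by simp
  define lam where "lam k = - mu$k / nu0" for k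
  show ?thesis
  proof (intro exI[of _ lam] conjI allI impI)
    fix k show "lam k \<ge> 0" unfolding lam_def using mu[of k] nu0p by (simp add: divide_nonpos_pos)
  next
    fix F assume d: "\<forall>k. (\<Sum>e\<in>UNIV. inc src dst e k * F e) = 0"
    have "((\<chi> k. load F k - (g k)\<^sup>2), primal_obj est F) \<in> S"
      using d by (intro memS) (auto simp: dv_def)
    then have "inner a ((\<chi> k. load F k - (g k)\<^sup>2), primal_obj est F) \<le> b" using ab by auto
    then have i: "(\<Sum>k\<in>UNIV. mu$k * (load F k - (g k)\<^sup>2)) + nu0 * primal_obj est F \<le> nu0 * p"
      unfolding inn using nu0 by simp
    have "(\<Sum>k\<in>UNIV. lam k * (load F k - (g k)\<^sup>2)) = (\<Sum>k\<in>UNIV. (- (mu$k * (load F k - (g k)\<^sup>2))) / nu0)"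
      unfolding lam_def by simp
    also have "\<dots> = (\<Sum>k\<in>UNIV. - (mu$k * (load F k - (g k)\<^sup>2))) / nu0"
      by (rule sum_divide_distrib[symmetric])
    also have "\<dots> = - (\<Sum>k\<in>UNIV. mu$k * (load F k - (g k)\<^sup>2)) / nu0"
      by (simp only: sum_negf)
    finally have eqS: "(\<Sum>k\<in>UNIV. lam k * (load F k - (g k)\<^sup>2)) = - (\<Sum>k\<in>UNIV. mu$k * (load F k - (g k)\<^sup>2)) / nu0" .
    have "primal_obj est F - (\<Sum>k\<in>UNIV. lam k * (load F k - (g k)\<^sup>2)) \<le> p"
      by (rule aux_div[OF nu0p i eqS])
    then show "primal_obj est F - (\<Sum>k\<in>UNIV. lam k *
           ((\<Sum>e\<in>UNIV. \<bar>inc src dst e k\<bar> * (F e)\<^sup>2) - (g k)\<^sup>2)) \<le> primal_obj est Fs"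
      unfolding load_def p_def .
  qed
qed



lemma grad:
  fixes src dst :: "'e::finite \<Rightarrow> 'v::finite" and g :: "'v \<Rightarrow> real"
  assumes opt: "primal_optimal src dst est g Fs" and lam: "\<forall>k. lam k \<ge> 0"
    and H: "\<forall>F. (\<forall>k. (\<Sum>e\<in>UNIV. inc src dst e k * F e) = 0) \<longrightarrow>
        primal_obj est F - (\<Sum>k\<in>UNIV. lam k *
           ((\<Sum>e\<in>UNIV. \<bar>inc src dst e k\<bar> * (F e)\<^sup>2) - (g k)\<^sup>2)) \<le> primal_obj est Fs"
    and d: "\<forall>k. (\<Sum>e\<in>UNIV. inc src dst e k * d e) = 0"
  shows "(\<Sum>e\<in>UNIV. (cvec est e - 2 * absAlam src dst lam e * Fs e) * d e) = 0"
proof -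
  define phi where "phi F = primal_obj est F - (\<Sum>k\<in>UNIV. lam k *
           ((\<Sum>e\<in>UNIV. \<bar>inc src dst e k\<bar> * (F e)\<^sup>2) - (g k)\<^sup>2))" for F
  have phi_eq: "phi F = (\<Sum>k\<in>UNIV. lam k * (g k)\<^sup>2) +
      (\<Sum>e\<in>UNIV. cvec est e * F e - absAlam src dst lam e * (F e)\<^sup>2)" for F
  proof -
    have "(\<Sum>k\<in>UNIV. lam k * ((\<Sum>e\<in>UNIV. \<bar>inc src dst e k\<bar> * (F e)\<^sup>2) - (g k)\<^sup>2))
        = (\<Sum>e\<in>UNIV. absAlam src dst lam e * (F e)\<^sup>2) - (\<Sum>k\<in>UNIV. lam k * (g k)\<^sup>2)"
      unfolding swap2[symmetric] by (simp add: right_diff_distrib sum_subtractf)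
    then show ?thesis unfolding phi_def primal_obj_def by (simp add: sum_subtractf)
  qed
  define X where "X = (\<Sum>e\<in>UNIV. (cvec est e - 2 * absAlam src dst lam e * Fs e) * d e)"
  define Y where "Y = (\<Sum>e\<in>UNIV. absAlam src dst lam e * (d e)\<^sup>2)"
  have Y: "Y \<ge> 0" unfolding Y_def by (intro sum_nonneg mult_nonneg_nonneg absAlam_nonneg[OF lam] zero_le_power2)
  have feas: "primal_feasible src dst g Fs" using opt unfolding primal_optimal_def by simp
  have base: "phi Fs \<ge> primal_obj est Fs"
  proof -
    have "(\<Sum>k\<in>UNIV. lam k * ((\<Sum>e\<in>UNIV. \<bar>inc src dst e k\<bar> * (Fs e)\<^sup>2) - (g k)\<^sup>2)) \<le> 0"
      using feas lam unfolding primal_feasible_def by (intro sum_nonpos mult_nonneg_nonpos) auto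
    then show ?thesis unfolding phi_def by simp
  qed
  have step: "phi (\<lambda>e. Fs e + t * d e) = phi Fs + t * X - t\<^sup>2 * Y" for t
  proof -
    have "cvec est e * (Fs e + t * d e) - absAlam src dst lam e * (Fs e + t * d e)\<^sup>2
       = (cvec est e * Fs e - absAlam src dst lam e * (Fs e)\<^sup>2)
         + t * ((cvec est e - 2 * absAlam src dst lam e * Fs e) * d e)
         - t\<^sup>2 * (absAlam src dst lam e * (d e)\<^sup>2)" for e
      by (simp add: power2_eq_square algebra_simps)
    then show ?thesis unfolding phi_eq X_def Y_def
      by (simp add: sum.distrib sum_subtractf sum_distrib_left)
  qed
  have bnd: "phi (\<lambda>e. Fs e + t * d e) \<le> primal_obj est Fs" for t
  proof -
    have dv0: "\<forall>k. (\<Sum>e\<in>UNIV. inc src dst e k * (Fs e + t * d e)) = 0"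
      using feas d unfolding primal_feasible_def
      by (simp add: distrib_left sum.distrib mult.left_commute[of _ t] sum_distrib_left[symmetric])
    show ?thesis unfolding phi_def using spec[OF H, of "\<lambda>e. Fs e + t * d e"] dv0 by simp
  qed
  have le: "t * X - t\<^sup>2 * Y \<le> 0" for t
  proof -
    have "phi Fs + t * X - t\<^sup>2 * Y \<le> phi Fs"
      using order_trans[OF bnd[of t] base] unfolding step .
    then show ?thesis by simp
  qed
  define t where "t = X / (Y + 1)"
  have Y1: "Y + 1 > 0" using Y by simp
  have tt: "X - t * Y = t" unfolding t_def using Y1 by (simp add: field_simps)
  have "t * X - t\<^sup>2 * Y = t * (X - t * Y)" by (simp add: power2_eq_square algebra_simps)
  also have "\<dots> = t\<^sup>2" unfolding tt by (simp add: power2_eq_square)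
  finally have "t * X - t\<^sup>2 * Y = t\<^sup>2" .
  then have "t\<^sup>2 \<le> 0" using le[of t] by simp
  then have "t\<^sup>2 = 0" using zero_le_power2[of t] by (rule antisym)
  then have "t = 0" by simp
  then show ?thesis using Y unfolding t_def X_def by simp
qed

lemma range_lemma:
  fixes src dst :: "'e::finite \<Rightarrow> 'v::finite" and G :: "'e \<Rightarrow> real"
  assumes H: "\<forall>d. (\<forall>k. (\<Sum>e\<in>UNIV. inc src dst e k * d e) = 0) \<longrightarrow> (\<Sum>e\<in>UNIV. G e * d e) = 0"
  shows "\<exists>mu. \<forall>e. G e = (\<Sum>k\<in>UNIV. inc src dst e k * mu k)"
proof -
  define Av :: "real^'v \<Rightarrow> real^'e" where "Av m = (\<chi> e. \<Sum>k\<in>UNIV. inc src dst e k * m$k)" for m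
  have lin: "linear Av"
    by (rule linearI) (simp_all add: Av_def vec_eq_iff sum.distrib algebra_simps sum_distrib_left)
  have sR: "subspace (range Av)" by (rule linear_subspace_image[OF lin subspace_UNIV])
  define Gv :: "real^'e" where "Gv = (\<chi> e. G e)"
  have "Gv \<in> range Av"
  proof (rule ccontr)
    assume nin: "Gv \<notin> range Av"
    obtain a b where ab: "inner a Gv < b" "\<forall>x\<in>range Av. inner a x > b"
      using separating_hyperplane_closed_point[OF subspace_imp_convex[OF sR] closed_subspace[OF sR] nin]
      by blast
    have rk: "r * (\<Sum>e\<in>UNIV. inc src dst e k * a$e) > b" for r k
    proof -
      have "inner a (Av (\<chi> j. if j = k then r else 0)) > b" using ab(2) by auto
      moreover have "inner a (Av (\<chi> j. if j = k then r else 0)) = r * (\<Sum>e\<in>UNIV. inc src dst e k * a$e)"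
        unfolding Av_def inner_vec_def
        by (simp add: if_distrib sum_distrib_left mult_ac cong: if_cong)
      ultimately show ?thesis by simp
    qed
    have b0: "b < 0" using rk[of 0] by simp
    have dk: "(\<Sum>e\<in>UNIV. inc src dst e k * a$e) = 0" for k
    proof (rule ccontr)
      assume nz: "(\<Sum>e\<in>UNIV. inc src dst e k * a$e) \<noteq> 0"
      have "(b - 1) / (\<Sum>e\<in>UNIV. inc src dst e k * a$e) * (\<Sum>e\<in>UNIV. inc src dst e k * a$e) = b - 1"
        using nz by simp
      then show False using rk[of "(b - 1) / (\<Sum>e\<in>UNIV. inc src dst e k * a$e)" k] by simp
    qed
    have "(\<Sum>e\<in>UNIV. G e * a$e) = 0" using H dk by auto
    moreover have "inner a Gv = (\<Sum>e\<in>UNIV. G e * a$e)" unfolding inner_vec_def Gv_def by (simp add: mult_ac)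
    ultimately show False using ab(1) b0 by simp
  qed
  then obtain m where "Gv = Av m" by auto
  then have "\<forall>e. G e = (\<Sum>k\<in>UNIV. inc src dst e k * m$k)" unfolding Gv_def Av_def by (simp add: vec_eq_iff)
  then show ?thesis by blast
qed



lemma exists_opt_pair:
  fixes src dst :: "'e::finite \<Rightarrow> 'v::finite" and g :: "'v \<Rightarrow> real"
  assumes g: "\<forall>k. g k > 0"
  shows "\<exists>F lam nu. primal_optimal src dst est g F \<and> dual_optimal src dst est g lam nu \<and>
          ereal (primal_obj est F) = dual_obj src dst est g lam nu"
proof -
  obtain Fs where opt: "primal_optimal src dst est g Fs" using exists_primal_opt[OF g] by blast
  have feas: "primal_feasible src dst g Fs" using opt unfolding primal_optimal_def by simp
  obtain lam where lam: "\<forall>k. lam k \<ge> 0" and H: "\<forall>F. (\<forall>k. (\<Sum>e\<in>UNIV. inc src dst e k * F e) = 0) \<longrightarrow>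
        primal_obj est F - (\<Sum>k\<in>UNIV. lam k *
           ((\<Sum>e\<in>UNIV. \<bar>inc src dst e k\<bar> * (F e)\<^sup>2) - (g k)\<^sup>2)) \<le> primal_obj est Fs"
    using exists_lam[OF g opt] by blast
  have "\<forall>d. (\<forall>k. (\<Sum>e\<in>UNIV. inc src dst e k * d e) = 0) \<longrightarrow>
      (\<Sum>e\<in>UNIV. (cvec est e - 2 * absAlam src dst lam e * Fs e) * d e) = 0"
    using grad[OF opt lam H] by blast
  from range_lemma[OF this] obtain mu where
    mu: "\<forall>e. cvec est e - 2 * absAlam src dst lam e * Fs e = (\<Sum>k\<in>UNIV. inc src dst e k * mu k)"
    by blast
  define nu where "nu k = - mu k" for k
  have b: "\<forall>e. cAnu src dst est nu e = 2 * absAlam src dst lam e * Fs e"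
  proof
    fix e
    have "(\<Sum>k\<in>UNIV. inc src dst e k * nu k) = - (\<Sum>k\<in>UNIV. inc src dst e k * mu k)"
      unfolding nu_def by (simp add: sum_negf[symmetric])
    then show "cAnu src dst est nu e = 2 * absAlam src dst lam e * Fs e"
      unfolding cAnu_def using mu[rule_format, of e] by linarith
  qed
  have div: "\<forall>k. (\<Sum>e\<in>UNIV. inc src dst e k * Fs e) = 0" using feas unfolding primal_feasible_def by simp
  note V = val_lem[OF div lam b]
  have sw: "(\<Sum>e\<in>UNIV. absAlam src dst lam e * (Fs e)\<^sup>2)
      = (\<Sum>k\<in>UNIV. lam k * (\<Sum>e\<in>UNIV. \<bar>inc src dst e k\<bar> * (Fs e)\<^sup>2))"
    by (rule swap2[symmetric])
  have cs: "(\<Sum>k\<in>UNIV. lam k * (\<Sum>e\<in>UNIV. \<bar>inc src dst e k\<bar> * (Fs e)\<^sup>2)) = (\<Sum>k\<in>UNIV. lam k * (g k)\<^sup>2)"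
  proof -
    have "(\<Sum>k\<in>UNIV. lam k * ((\<Sum>e\<in>UNIV. \<bar>inc src dst e k\<bar> * (Fs e)\<^sup>2) - (g k)\<^sup>2)) \<le> 0"
      using feas lam unfolding primal_feasible_def by (intro sum_nonpos mult_nonneg_nonpos) auto
    moreover have "(\<Sum>k\<in>UNIV. lam k * ((\<Sum>e\<in>UNIV. \<bar>inc src dst e k\<bar> * (Fs e)\<^sup>2) - (g k)\<^sup>2)) \<ge> 0"
      using H div by force
    ultimately have "(\<Sum>k\<in>UNIV. lam k * ((\<Sum>e\<in>UNIV. \<bar>inc src dst e k\<bar> * (Fs e)\<^sup>2) - (g k)\<^sup>2)) = 0"
      by simp
    then show ?thesis by (simp add: right_diff_distrib sum_subtractf)
  qed
  have eq: "ereal (primal_obj est Fs) = dual_obj src dst est g lam nu"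
    using V sw cs by simp
  have dopt: "dual_optimal src dst est g lam nu"
    unfolding dual_optimal_def
  proof (intro conjI allI impI)
    fix k show "0 \<le> lam k" using lam by simp
  next
    fix lam' nu' :: "'v \<Rightarrow> real" assume "\<forall>k. lam' k \<ge> 0"
    then show "dual_obj src dst est g lam nu \<le> dual_obj src dst est g lam' nu'"
      using eq weak[OF feas, of lam' est nu'] by simp
  qed
  show ?thesis using opt dopt eq by blast
qed

theorem proposition1:
  fixes src dst :: "'e::finite \<Rightarrow> 'v::finite" and s t :: 'v and est :: 'e
    and g :: "'v \<Rightarrow> real"
  assumes "transport_graph src dst s t est"
    and "\<forall>k. g k > 0"
  shows
    \<comment> \<open>the Lagrangian dual function is the stated dual objective\<close>
    "(\<forall>lam nu. (\<forall>k. lam k \<ge> 0) \<longrightarrow>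
        dual_fun src dst est g lam nu = dual_obj src dst est g lam nu)
     \<comment> \<open>primal max and dual min are attained and coincide\<close>
     \<and> (\<exists>F lam nu. primal_optimal src dst est g F \<and> dual_optimal src dst est g lam nu \<and>
          ereal (primal_obj est F) = dual_obj src dst est g lam nu)
     \<comment> \<open>every optimal triple satisfies the stated identities\<close>
     \<and> (\<forall>F lam nu. primal_optimal src dst est g F \<and> dual_optimal src dst est g lam nu \<longrightarrow>
          primal_obj est F = 2 * (\<Sum>k\<in>UNIV. lam k * (g k)\<^sup>2)
          \<and> (\<forall>k. lam k * (\<Sum>e\<in>UNIV. \<bar>inc src dst e k\<bar> *
                   (cAnu src dst est nu e / absAlam src dst lam e)\<^sup>2)
                 = 4 * (lam k * (g k)\<^sup>2)))"
proof (intro conjI allI impI)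
  fix lam nu :: "'v \<Rightarrow> real" assume "\<forall>k. lam k \<ge> 0"
  then show "dual_fun src dst est g lam nu = dual_obj src dst est g lam nu" by (rule dual_fun_eq)
next
  show "\<exists>F lam nu. primal_optimal src dst est g F \<and> dual_optimal src dst est g lam nu \<and>
          ereal (primal_obj est F) = dual_obj src dst est g lam nu"
    by (rule exists_opt_pair[OF assms(2)])
next
  fix F lam nu
  assume A: "primal_optimal src dst est g F \<and> dual_optimal src dst est g lam nu"
  obtain F0 lam0 nu0 where P0: "primal_optimal src dst est g F0" "dual_optimal src dst est g lam0 nu0"
     "ereal (primal_obj est F0) = dual_obj src dst est g lam0 nu0"
    using exists_opt_pair[OF assms(2)] by blast
  have feas: "primal_feasible src dst g F" using A unfolding primal_optimal_def by simp
  have lam: "\<forall>k. lam k \<ge> 0" using A unfolding dual_optimal_def by simp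
  have "primal_obj est F = primal_obj est F0"
    using A P0(1) unfolding primal_optimal_def by (meson order_antisym)
  moreover have "dual_obj src dst est g lam nu \<le> dual_obj src dst est g lam0 nu0"
    using A P0(2) unfolding dual_optimal_def by blast
  ultimately have le: "dual_obj src dst est g lam nu \<le> ereal (primal_obj est F)" using P0(3) by simp
  note T = tight[OF feas lam le]
  have b: "\<forall>e. cAnu src dst est nu e = 2 * absAlam src dst lam e * F e" by (rule conjunct1[OF T])
  have cs: "\<forall>k. lam k * (\<Sum>e\<in>UNIV. \<bar>inc src dst e k\<bar> * (F e)\<^sup>2) = lam k * (g k)\<^sup>2" by (rule conjunct2[OF T])
  have div: "\<forall>k. (\<Sum>e\<in>UNIV. inc src dst e k * F e) = 0" using feas unfolding primal_feasible_def by simp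
  have "primal_obj est F = 2 * (\<Sum>e\<in>UNIV. absAlam src dst lam e * (F e)\<^sup>2)" by (rule val_lem(1)[OF div lam b])
  also have "\<dots> = 2 * (\<Sum>k\<in>UNIV. lam k * (\<Sum>e\<in>UNIV. \<bar>inc src dst e k\<bar> * (F e)\<^sup>2))"
    by (simp add: swap2)
  also have "\<dots> = 2 * (\<Sum>k\<in>UNIV. lam k * (g k)\<^sup>2)" by (simp only: cs)
  finally show "primal_obj est F = 2 * (\<Sum>k\<in>UNIV. lam k * (g k)\<^sup>2)" .
next
  fix F lam nu k
  assume A: "primal_optimal src dst est g F \<and> dual_optimal src dst est g lam nu"
  obtain F0 lam0 nu0 where P0: "primal_optimal src dst est g F0" "dual_optimal src dst est g lam0 nu0"
     "ereal (primal_obj est F0) = dual_obj src dst est g lam0 nu0"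
    using exists_opt_pair[OF assms(2)] by blast
  have feas: "primal_feasible src dst g F" using A unfolding primal_optimal_def by simp
  have lam: "\<forall>k. lam k \<ge> 0" using A unfolding dual_optimal_def by simp
  have "primal_obj est F = primal_obj est F0"
    using A P0(1) unfolding primal_optimal_def by (meson order_antisym)
  moreover have "dual_obj src dst est g lam nu \<le> dual_obj src dst est g lam0 nu0"
    using A P0(2) unfolding dual_optimal_def by blast
  ultimately have le: "dual_obj src dst est g lam nu \<le> ereal (primal_obj est F)" using P0(3) by simp
  note T = tight[OF feas lam le]
  have b: "\<forall>e. cAnu src dst est nu e = 2 * absAlam src dst lam e * F e" by (rule conjunct1[OF T])
  have cs: "lam k * (\<Sum>e\<in>UNIV. \<bar>inc src dst e k\<bar> * (F e)\<^sup>2) = lam k * (g k)\<^sup>2" by (rule spec[OF conjunct2[OF T]])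
  show "lam k * (\<Sum>e\<in>UNIV. \<bar>inc src dst e k\<bar> *
                   (cAnu src dst est nu e / absAlam src dst lam e)\<^sup>2)
                 = 4 * (lam k * (g k)\<^sup>2)"
  proof (cases "lam k = 0")
    case True then show ?thesis by simp
  next
    case False
    then have lk: "lam k > 0" using lam by (simp add: less_le)
    have te: "\<bar>inc src dst e k\<bar> * (cAnu src dst est nu e / absAlam src dst lam e)\<^sup>2
        = 4 * (\<bar>inc src dst e k\<bar> * (F e)\<^sup>2)" for e
    proof (cases "\<bar>inc src dst e k\<bar> = 0")
      case True then show ?thesis by simp
    next
      case False
      then have "\<bar>inc src dst e k\<bar> = 1" using abs_inc[of src dst e k] by simp
      then have "absAlam src dst lam e \<ge> lam k" using absAlam_ge[OF lam, of src dst e k] by simp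
      then have "absAlam src dst lam e > 0" using lk by simp
      then have "cAnu src dst est nu e / absAlam src dst lam e = 2 * F e" using b by simp
      then show ?thesis by (simp add: power2_eq_square)
    qed
    then have "(\<Sum>e\<in>UNIV. \<bar>inc src dst e k\<bar> * (cAnu src dst est nu e / absAlam src dst lam e)\<^sup>2)
        = (\<Sum>e\<in>UNIV. 4 * (\<bar>inc src dst e k\<bar> * (F e)\<^sup>2))" by (simp only: te)
    also have "\<dots> = 4 * (\<Sum>e\<in>UNIV. \<bar>inc src dst e k\<bar> * (F e)\<^sup>2)" by (simp add: sum_distrib_left)
    finally have "lam k * (\<Sum>e\<in>UNIV. \<bar>inc src dst e k\<bar> * (cAnu src dst est nu e / absAlam src dst lam e)\<^sup>2)
        = 4 * (lam k * (\<Sum>e\<in>UNIV. \<bar>inc src dst e k\<bar> * (F e)\<^sup>2))" by simp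
    then show ?thesis unfolding cs .
  qed
qed

end
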